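(* Let $F$ be the elementary cellular automaton with rule number 104. For every nonempty finite word $u\in\{0,1\}^*$, the deterministic communication complexity of $\textsc{SInv}_{F,u}$ restricted to inputs of length $n$ is bounded by a constant independent of $n$.
   Context: An elementary cellular automaton (ECA) with rule number $N\in\{0,\dots,255\}$ is the map $F:\{0,1\}^{\mathbb Z}\to\{0,1\}^{\mathbb Z}$ given by $F(x)_i=f(x_{i-1},x_i,x_{i+1})$. Here the local rule $f:\{0,1\}^3\to\{0,1\}$ is determined by $N=\sum_{a,b,c\in\{0,1\}}2^{4a+2b+c}f(a,b,c)$. For a nonempty finite word $u$, $p_u\in\{0,1\}^{\mathbb Z}$ is defined by $(p_u)_i=u_{i\bmod |u|}$. For a finite word $x$, $p_u[x]$ is the configuration equal to $x$ on positions $0,\dots,|x|-1$ and to $p_u$ elsewhere. $\textsc{SInv}_{F,u}$ is the decision problem: on input a finite word $x$, decide whether there is an integer $w$ such that for all $t\ge0$ the set of positions where $F^t(p_u)$ and $F^t(p_u[x])$ differ is contained in an interval of length $w$. For each $n$, it is regarded as a function $\{0,1\}^n\to\{0,1\}$. For a function $g:X\times Y\to Z$, $D(g)$ is the minimal depth of a deterministic two-party protocol computing $g$. In such a protocol, Alice knows $x$ and Bob knows $y$. The protocol is a binary tree: each internal node is labelled by a function of Alice's input only or of Bob's input only, with values in $\{\text{left},\text{right}\}$, and each leaf is labelled by an output value. For $g:\{0,1\}^m\to Z$, set $D(g)=\max_{0\le i<m}D(g_i)$, where $g_i:\{0,1\}^i\times\{0,1\}^{m-i}\to Z$ is $g_i(x,y)=g(xy)$.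 *)

theory Defs
  imports Main
begin

text \<open>Configurations over {0,1}, encoded as booleans (True = 1).\<close>
type_synonym config = "int \<Rightarrow> bool"

definition eca_local :: "nat \<Rightarrow> bool \<Rightarrow> bool \<Rightarrow> bool \<Rightarrow> bool" where
  "eca_local N a b c = odd (N div 2 ^ (4 * of_bool a + 2 * of_bool b + of_bool c))"

definition eca :: "nat \<Rightarrow> config \<Rightarrow> config" where
  "eca N x = (\<lambda>i. eca_local N (x (i - 1)) (x i) (x (i + 1)))"

definition per :: "bool list \<Rightarrow> config" where
  "per u = (\<lambda>i. u ! nat (i mod int (length u)))"

definition per_patch :: "bool list \<Rightarrow> bool list \<Rightarrow> config" where
  "per_patch u x = (\<lambda>i. if 0 \<le> i \<and> i < int (length x) then x ! nat i else per u i)"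

definition SInv :: "nat \<Rightarrow> bool list \<Rightarrow> bool list \<Rightarrow> bool" where
  "SInv N u x = (\<exists>w::nat. \<forall>t::nat. \<exists>a::int.
      {i. (eca N ^^ t) (per u) i \<noteq> (eca N ^^ t) (per_patch u x) i} \<subseteq> {a..<a + int w})"

datatype ('a, 'b, 'z) protocol =
    Leaf 'z
  | AliceNode "'a \<Rightarrow> bool" "('a, 'b, 'z) protocol" "('a, 'b, 'z) protocol"
  | BobNode "'b \<Rightarrow> bool" "('a, 'b, 'z) protocol" "('a, 'b, 'z) protocol"

fun run_prot :: "('a, 'b, 'z) protocol \<Rightarrow> 'a \<Rightarrow> 'b \<Rightarrow> 'z" where
  "run_prot (Leaf z) x y = z"
| "run_prot (AliceNode q l r) x y = (if q x then run_prot l x y else run_prot r x y)"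
| "run_prot (BobNode q l r) x y = (if q y then run_prot l x y else run_prot r x y)"

fun prot_depth :: "('a, 'b, 'z) protocol \<Rightarrow> nat" where
  "prot_depth (Leaf z) = 0"
| "prot_depth (AliceNode q l r) = Suc (max (prot_depth l) (prot_depth r))"
| "prot_depth (BobNode q l r) = Suc (max (prot_depth l) (prot_depth r))"

definition cc :: "'a set \<Rightarrow> 'b set \<Rightarrow> ('a \<Rightarrow> 'b \<Rightarrow> 'z) \<Rightarrow> nat" where
  "cc X Y g = (LEAST d. \<exists>P :: ('a, 'b, 'z) protocol.
      prot_depth P = d \<and> (\<forall>x\<in>X. \<forall>y\<in>Y. run_prot P x y = g x y))"

definition cc_word :: "(bool list \<Rightarrow> 'z) \<Rightarrow> nat \<Rightarrow> nat" where
  "cc_word g m = (if m = 0 then 0 else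
     Max ((\<lambda>i. cc {x. length x = i} {y. length y = m - i} (\<lambda>x y. g (x @ y))) ` {..<m}))"

end

theory Submission
  imports Defs
begin

lemma loc104: "eca_local 104 a b c = ((a \<and> b \<and> \<not>c) \<or> (a \<and> \<not>b \<and> c) \<or> (\<not>a \<and> b \<and> c))"
  by (cases a; cases b; cases c) (simp_all add: eca_local_def)

lemma F_apply: "eca 104 c i = ((c (i-1) \<and> c i \<and> \<not>c (i+1)) \<or> (c (i-1) \<and> \<not>c i \<and> c (i+1)) \<or> (\<not>c (i-1) \<and> c i \<and> c (i+1)))"
  by (simp add: eca_def loc104)

lemma per_shift: "u \<noteq> [] \<Longrightarrow> per u (i + int (length u)) = per u i"
  by (simp add: per_def)

lemma F_periodic:
  assumes "\<forall>i. c (i + p) = c i"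
  shows "\<forall>i. eca 104 c (i + p) = eca 104 c i"
proof
  fix i
  have "c (i + p - 1) = c (i - 1)" using assms[rule_format, of "i - 1"] by (simp add: algebra_simps)
  moreover have "c (i + p + 1) = c (i + 1)" using assms[rule_format, of "i + 1"] by (simp add: algebra_simps)
  moreover have "c (i + p) = c i" using assms by simp
  ultimately show "eca 104 c (i + p) = eca 104 c i" by (simp add: F_apply)
qed

lemma Fk_periodic:
  assumes "\<forall>i. c (i + p) = c i"
  shows "\<forall>i. (eca 104 ^^ k) c (i + p) = (eca 104 ^^ k) c i"
  by (induction k) (use assms F_periodic in auto)

lemma periodic_mult:
  assumes "\<forall>i. c (i + p) = c i"
  shows "c (i + int m * p) = c i"
proof (induction m)
  case 0 then show ?case by simp
next
  case (Suc m)
  have "c (i + int (Suc m) * p) = c ((i + int m * p) + p)" by (simp add: algebra_simps)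
  also have "\<dots> = c (i + int m * p)" using assms by simp
  finally show ?case using Suc by simp
qed

lemma periodic_mult_neg:
  assumes "\<forall>i. c (i + p) = c i"
  shows "c (i - int m * p) = c i"
  using periodic_mult[OF assms, of "i - int m * p" m] by simp

lemma light_cone1:
  assumes "\<forall>i. i < a \<or> i \<ge> b \<longrightarrow> c i = d i"
  shows "\<forall>i. i < a - 1 \<or> i \<ge> b + 1 \<longrightarrow> eca 104 c i = eca 104 d i"
proof (intro allI impI)
  fix i assume h: "i < a - 1 \<or> i \<ge> b + 1"
  have "c (i-1) = d (i-1)" "c i = d i" "c (i+1) = d (i+1)" using h assms by auto
  then show "eca 104 c i = eca 104 d i" by (simp add: F_apply)
qed

lemma light_cone:
  assumes "\<forall>i. i < a \<or> i \<ge> b \<longrightarrow> c i = d i"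
  shows "\<forall>i. i < a - int t \<or> i \<ge> b + int t \<longrightarrow> (eca 104 ^^ t) c i = (eca 104 ^^ t) d i"
proof (induction t)
  case 0 then show ?case using assms by simp
next
  case (Suc t)
  from light_cone1[OF Suc] show ?case by (simp add: algebra_simps)
qed

definition Inv where
  "Inv jl jr c d = ((\<forall>i. i \<le> jl + 1 \<longrightarrow> c i = d i) \<and> (\<forall>i. i \<ge> jr \<longrightarrow> c i = d i) \<and>
     \<not> c jl \<and> \<not> c (jl+1) \<and> \<not> c jr \<and> \<not> c (jr+1))"

lemma Inv_step: "Inv jl jr c d \<Longrightarrow> Inv jl jr (eca 104 c) (eca 104 d)"
proof -
  assume I: "Inv jl jr c d"
  have dz: "\<not> d jl" "\<not> d (jl+1)" "\<not> d jr" "\<not> d (jr+1)" using I unfolding Inv_def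
    by (metis order_refl le_add_same_cancel1 zero_le_one add_increasing2 linorder_not_le)+
  have L: "\<forall>i. i \<le> jl + 1 \<longrightarrow> eca 104 c i = eca 104 d i"
  proof (intro allI impI)
    fix i assume "i \<le> jl + 1"
    then consider "i < jl" | "i = jl" | "i = jl + 1" by linarith
    then show "eca 104 c i = eca 104 d i"
    proof cases
      case 1
      have "c (i-1) = d (i-1)" "c i = d i" "c (i+1) = d (i+1)" using 1 I unfolding Inv_def by auto
      then show ?thesis by (simp add: F_apply)
    next
      case 2 then show ?thesis using I dz unfolding Inv_def by (simp add: F_apply)
    next
      case 3 then show ?thesis using I dz unfolding Inv_def by (simp add: F_apply)
    qed
  qed
  have R: "\<forall>i. i \<ge> jr \<longrightarrow> eca 104 c i = eca 104 d i"
  proof (intro allI impI)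
    fix i assume "i \<ge> jr"
    then consider "i > jr + 1" | "i = jr" | "i = jr + 1" by linarith
    then show "eca 104 c i = eca 104 d i"
    proof cases
      case 1
      have "c (i-1) = d (i-1)" "c i = d i" "c (i+1) = d (i+1)" using 1 I unfolding Inv_def by auto
      then show ?thesis by (simp add: F_apply)
    next
      case 2 then show ?thesis using I dz unfolding Inv_def by (simp add: F_apply)
    next
      case 3 then show ?thesis using I dz unfolding Inv_def by (simp add: F_apply)
    qed
  qed
  have "\<not> eca 104 c jl" "\<not> eca 104 c (jl+1)" "\<not> eca 104 c jr" "\<not> eca 104 c (jr+1)"
    using I unfolding Inv_def by (simp_all add: F_apply)
  with L R show ?thesis unfolding Inv_def by blast
qed

lemma Inv_iter: "Inv jl jr c d \<Longrightarrow> Inv jl jr ((eca 104 ^^ s) c) ((eca 104 ^^ s) d)"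
  by (induction s) (auto intro: Inv_step)


lemma per_periodic: "u \<noteq> [] \<Longrightarrow> \<forall>i. per u (i + int (length u)) = per u i"
  using per_shift by blast

lemma patch_agree: "\<forall>i. i < 0 \<or> i \<ge> int (length x) \<longrightarrow> per u i = per_patch u x i"
  by (simp add: per_patch_def)

lemma caseA:
  assumes u: "u \<noteq> []" and w1: "\<not> (eca 104 ^^ k) (per u) j" and w2: "\<not> (eca 104 ^^ k) (per u) (j+1)"
  shows "SInv 104 u x"
proof -
  define P where "P = per u"
  define Q where "Q = per_patch u x"
  define L where "L = int (length x)"
  define p where "p = int (length u)"
  have p1: "p \<ge> 1" using u by (simp add: p_def Suc_le_eq)
  have perk: "\<forall>i. (eca 104 ^^ k) P (i + p) = (eca 104 ^^ k) P i"
    using Fk_periodic[OF per_periodic[OF u]] by (simp add: P_def p_def)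
  define m1 where "m1 = nat (j + int k + 2)"
  define jl where "jl = j - int m1 * p"
  define m2 where "m2 = nat (L + int k - j)"
  define jr where "jr = j + int m2 * p"
  have "int m1 * p \<ge> int m1" using p1 by (simp add: mult_le_cancel_left1)
  hence jl_le: "jl \<le> - int k - 2" unfolding jl_def m1_def by linarith
  have "int m2 * p \<ge> int m2" using p1 by (simp add: mult_le_cancel_left1)
  hence jr_ge: "jr \<ge> L + int k" unfolding jr_def m2_def by linarith
  have a1: "\<not> (eca 104 ^^ k) P jl" using periodic_mult_neg[OF perk, of j m1] w1 by (simp add: jl_def P_def)
  have a2: "\<not> (eca 104 ^^ k) P (jl+1)" using periodic_mult_neg[OF perk, of "j+1" m1] w2
    by (simp add: jl_def P_def algebra_simps)
  have a3: "\<not> (eca 104 ^^ k) P jr" using periodic_mult[OF perk, of j m2] w1 by (simp add: jr_def P_def)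
  have a4: "\<not> (eca 104 ^^ k) P (jr+1)" using periodic_mult[OF perk, of "j+1" m2] w2
    by (simp add: jr_def P_def algebra_simps)
  have lc: "\<And>t. \<forall>i. i < 0 - int t \<or> i \<ge> L + int t \<longrightarrow> (eca 104 ^^ t) P i = (eca 104 ^^ t) Q i"
    using light_cone[OF patch_agree] by (simp add: P_def Q_def L_def)
  have Ik: "Inv jl jr ((eca 104 ^^ k) P) ((eca 104 ^^ k) Q)"
    unfolding Inv_def using a1 a2 a3 a4 lc[of k] jl_le jr_ge by auto
  have It: "Inv jl jr ((eca 104 ^^ t) P) ((eca 104 ^^ t) Q)" if "t \<ge> k" for t
  proof -
    have "t = (t - k) + k" using that by simp
    then have "\<And>c. (eca 104 ^^ t) c = (eca 104 ^^ (t-k)) ((eca 104 ^^ k) c)"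
      by (metis funpow_add comp_apply)
    then show ?thesis using Inv_iter[OF Ik, of "t-k"] by simp
  qed
  show ?thesis unfolding SInv_def
  proof (intro exI allI)
    fix t
    show "{i. (eca 104 ^^ t) (per u) i \<noteq> (eca 104 ^^ t) (per_patch u x) i} \<subseteq> {jl..<jl + int (nat (jr - jl + 1))}"
    proof
      fix i assume "i \<in> {i. (eca 104 ^^ t) (per u) i \<noteq> (eca 104 ^^ t) (per_patch u x) i}"
      hence d: "(eca 104 ^^ t) P i \<noteq> (eca 104 ^^ t) Q i" by (simp add: P_def Q_def)
      have "jl < i \<and> i < jr"
      proof (cases "t \<ge> k")
        case True
        have A: "\<forall>i. i \<le> jl + 1 \<longrightarrow> (eca 104 ^^ t) P i = (eca 104 ^^ t) Q i"
          and B: "\<forall>i. i \<ge> jr \<longrightarrow> (eca 104 ^^ t) P i = (eca 104 ^^ t) Q i"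
          using It[OF True] unfolding Inv_def by auto
        have "\<not> i \<le> jl + 1" using A d by blast
        moreover have "\<not> i \<ge> jr" using B d by blast
        ultimately show ?thesis by linarith
      next
        case False
        have "\<not> (i < 0 - int t \<or> L + int t \<le> i)" using lc[of t] d by blast
        then show ?thesis using False jl_le jr_ge by linarith
      qed
      then show "i \<in> {jl..<jl + int (nat (jr - jl + 1))}" by simp
    qed
  qed
qed


lemma left_step:
  assumes "\<forall>i<l. c i = d i" "c l \<noteq> d l" "c (l-2) \<or> c (l-1)"
  shows "eca 104 c (l-1) \<noteq> eca 104 d (l-1) \<and> (\<forall>i<l-1. eca 104 c i = eca 104 d i)"
proof
  have "c (l-2) = d (l-2)" "c (l-1) = d (l-1)" using assms(1) by auto
  moreover have e1: "l - 1 - 1 = l - 2" and e2: "l - 1 + 1 = l" by simp_all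
  have "eca 104 c (l-1) = ((c (l-2) \<and> c (l-1) \<and> \<not>c l) \<or> (c (l-2) \<and> \<not>c (l-1) \<and> c l) \<or> (\<not>c (l-2) \<and> c (l-1) \<and> c l))"
    using F_apply[of c "l-1"] unfolding e1 e2 .
  moreover have "eca 104 d (l-1) = ((d (l-2) \<and> d (l-1) \<and> \<not>d l) \<or> (d (l-2) \<and> \<not>d (l-1) \<and> d l) \<or> (\<not>d (l-2) \<and> d (l-1) \<and> d l))"
    using F_apply[of d "l-1"] unfolding e1 e2 .
  ultimately show "eca 104 c (l-1) \<noteq> eca 104 d (l-1)" using assms(2,3) by auto
next
  show "\<forall>i<l-1. eca 104 c i = eca 104 d i"
  proof (intro allI impI)
    fix i assume "i < l - 1"
    then have "c (i-1) = d (i-1)" "c i = d i" "c (i+1) = d (i+1)" using assms(1) by auto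
    then show "eca 104 c i = eca 104 d i" by (simp add: F_apply)
  qed
qed

lemma right_step:
  assumes "\<forall>i>r. c i = d i" "c r \<noteq> d r" "c (r+1) \<or> c (r+2)"
  shows "eca 104 c (r+1) \<noteq> eca 104 d (r+1) \<and> (\<forall>i>r+1. eca 104 c i = eca 104 d i)"
proof
  have "c (r+2) = d (r+2)" "c (r+1) = d (r+1)" using assms(1) by auto
  moreover have e1: "r + 1 - 1 = r" and e2: "r + 1 + 1 = r + 2" by simp_all
  have "eca 104 c (r+1) = ((c r \<and> c (r+1) \<and> \<not>c (r+2)) \<or> (c r \<and> \<not>c (r+1) \<and> c (r+2)) \<or> (\<not>c r \<and> c (r+1) \<and> c (r+2)))"
    using F_apply[of c "r+1"] unfolding e1 e2 .
  moreover have "eca 104 d (r+1) = ((d r \<and> d (r+1) \<and> \<not>d (r+2)) \<or> (d r \<and> \<not>d (r+1) \<and> d (r+2)) \<or> (\<not>d r \<and> d (r+1) \<and> d (r+2)))"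
    using F_apply[of d "r+1"] unfolding e1 e2 .
  ultimately show "eca 104 c (r+1) \<noteq> eca 104 d (r+1)" using assms(2,3) by auto
next
  show "\<forall>i>r+1. eca 104 c i = eca 104 d i"
  proof (intro allI impI)
    fix i assume "i > r + 1"
    then have "c (i-1) = d (i-1)" "c i = d i" "c (i+1) = d (i+1)" using assms(1) by auto
    then show "eca 104 c i = eca 104 d i" by (simp add: F_apply)
  qed
qed

definition ok :: "bool list \<Rightarrow> bool list \<Rightarrow> bool" where
  "ok u x = (\<forall>i<length x. x ! i = per u (int i))"

lemma ok_SInv: "ok u x \<Longrightarrow> SInv 104 u x"
proof -
  assume o: "ok u x"
  have "per_patch u x = per u"
  proof
    fix i
    show "per_patch u x i = per u i"
    proof (cases "0 \<le> i \<and> i < int (length x)")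
      case True
      then have "x ! nat i = per u (int (nat i))" using o unfolding ok_def by (simp add: nat_less_iff)
      then show ?thesis using True by (simp add: per_patch_def)
    next
      case False then show ?thesis unfolding per_patch_def by auto
    qed
  qed
  then show ?thesis unfolding SInv_def by (intro exI[of _ 0] allI) simp
qed

lemma caseB:
  assumes nowall: "\<forall>k j. (eca 104 ^^ k) (per u) j \<or> (eca 104 ^^ k) (per u) (j+1)"
    and S: "SInv 104 u x"
  shows "ok u x"
proof (rule ccontr)
  assume nok: "\<not> ok u x"
  define P where "P = per u"
  define Q where "Q = per_patch u x"
  define D where "D = {i. P i \<noteq> Q i}"
  have Dsub: "D \<subseteq> {0..<int (length x)}" unfolding D_def P_def Q_def per_patch_def by auto
  then have fin: "finite D" using finite_subset by blast
  obtain i0 where i0: "i0 < length x" "x ! i0 \<noteq> per u (int i0)" using nok unfolding ok_def by blast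
  have "int i0 \<in> D" using i0 unfolding D_def P_def Q_def per_patch_def by simp
  then have ne: "D \<noteq> {}" by blast
  define l0 where "l0 = Min D"
  define r0 where "r0 = Max D"
  have l0D: "l0 \<in> D" and r0D: "r0 \<in> D" using fin ne by (simp_all add: l0_def r0_def)
  have lr: "l0 \<le> r0" using fin ne by (simp add: l0_def r0_def)
  have lmin: "\<forall>i<l0. P i = Q i"
  proof (intro allI impI)
    fix i assume "i < l0"
    show "P i = Q i"
    proof (rule ccontr)
      assume "P i \<noteq> Q i"
      then have "i \<in> D" by (simp add: D_def)
      then have "l0 \<le> i" unfolding l0_def using fin by simp
      then show False using \<open>i < l0\<close> by simp
    qed
  qed
  have rmax: "\<forall>i>r0. P i = Q i"
  proof (intro allI impI)
    fix i assume "i > r0"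
    show "P i = Q i"
    proof (rule ccontr)
      assume "P i \<noteq> Q i"
      then have "i \<in> D" by (simp add: D_def)
      then have "i \<le> r0" unfolding r0_def using fin by simp
      then show False using \<open>i > r0\<close> by simp
    qed
  qed
  have Lt: "(eca 104 ^^ t) P (l0 - int t) \<noteq> (eca 104 ^^ t) Q (l0 - int t) \<and>
      (\<forall>i<l0 - int t. (eca 104 ^^ t) P i = (eca 104 ^^ t) Q i)" for t
  proof (induction t)
    case 0 then show ?case using l0D lmin unfolding D_def by simp
  next
    case (Suc t)
    have w: "(eca 104 ^^ t) P (l0 - int t - 2) \<or> (eca 104 ^^ t) P (l0 - int t - 1)"
      using nowall[rule_format, of t "l0 - int t - 2"] by (simp add: P_def algebra_simps)
    from left_step[OF Suc[THEN conjunct2] Suc[THEN conjunct1] w]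
    show ?case by (simp add: algebra_simps)
  qed
  have Rt: "(eca 104 ^^ t) P (r0 + int t) \<noteq> (eca 104 ^^ t) Q (r0 + int t) \<and>
      (\<forall>i>r0 + int t. (eca 104 ^^ t) P i = (eca 104 ^^ t) Q i)" for t
  proof (induction t)
    case 0 then show ?case using r0D rmax unfolding D_def by simp
  next
    case (Suc t)
    have w: "(eca 104 ^^ t) P (r0 + int t + 1) \<or> (eca 104 ^^ t) P (r0 + int t + 2)"
      using nowall[rule_format, of t "r0 + int t + 1"] by (simp add: P_def algebra_simps)
    from right_step[OF Suc[THEN conjunct2] Suc[THEN conjunct1] w]
    show ?case by (simp add: algebra_simps)
  qed
  from S obtain w :: nat where wS: "\<forall>t. \<exists>a. {i. (eca 104 ^^ t) P i \<noteq> (eca 104 ^^ t) Q i} \<subseteq> {a..<a + int w}"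
    unfolding SInv_def P_def Q_def by blast
  obtain a where a: "{i. (eca 104 ^^ w) P i \<noteq> (eca 104 ^^ w) Q i} \<subseteq> {a..<a + int w}"
    using wS by blast
  have "l0 - int w \<in> {a..<a + int w}" using a Lt[of w] by blast
  moreover have "r0 + int w \<in> {a..<a + int w}" using a Rt[of w] by blast
  ultimately show False using lr by simp
qed


lemma ok_append: "ok u (xs @ ys) = (ok u xs \<and> (\<forall>j<length ys. ys ! j = per u (int (length xs) + int j)))"
proof
  assume o: "ok u (xs @ ys)"
  have "ok u xs" unfolding ok_def
  proof (intro allI impI)
    fix i assume "i < length xs"
    then show "xs ! i = per u (int i)" using o[unfolded ok_def, rule_format, of i] by (simp add: nth_append)
  qed
  moreover have "\<forall>j<length ys. ys ! j = per u (int (length xs) + int j)"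
  proof (intro allI impI)
    fix j assume "j < length ys"
    then show "ys ! j = per u (int (length xs) + int j)"
      using o[unfolded ok_def, rule_format, of "length xs + j"] by (simp add: nth_append)
  qed
  ultimately show "ok u xs \<and> (\<forall>j<length ys. ys ! j = per u (int (length xs) + int j))" by blast
next
  assume h: "ok u xs \<and> (\<forall>j<length ys. ys ! j = per u (int (length xs) + int j))"
  show "ok u (xs @ ys)" unfolding ok_def
  proof (intro allI impI)
    fix i assume i: "i < length (xs @ ys)"
    show "(xs @ ys) ! i = per u (int i)"
    proof (cases "i < length xs")
      case True then show ?thesis using h unfolding ok_def by (simp add: nth_append)
    next
      case False
      then have "i - length xs < length ys" using i by simp
      then have "ys ! (i - length xs) = per u (int (length xs) + int (i - length xs))" using h by blast
      moreover have "int (length xs) + int (i - length xs) = int i" using False by simp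
      ultimately show ?thesis using False by (simp add: nth_append)
    qed
  qed
qed

lemma SInv_cases: "u \<noteq> [] \<Longrightarrow> (\<forall>x. SInv 104 u x) \<or> (\<forall>x. SInv 104 u x = ok u x)"
proof -
  assume u: "u \<noteq> []"
  show ?thesis
  proof (cases "\<forall>k j. (eca 104 ^^ k) (per u) j \<or> (eca 104 ^^ k) (per u) (j+1)")
    case True
    then have "\<forall>x. SInv 104 u x = ok u x" using caseB ok_SInv by blast
    then show ?thesis by blast
  next
    case False
    then obtain k j where "\<not> (eca 104 ^^ k) (per u) j" "\<not> (eca 104 ^^ k) (per u) (j+1)" by blast
    then have "\<forall>x. SInv 104 u x" using caseA[OF u] by blast
    then show ?thesis by blast
  qed
qed

lemma cc_le: "\<forall>x\<in>X. \<forall>y\<in>Y. run_prot P x y = g x y \<Longrightarrow> cc X Y g \<le> prot_depth P"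
  unfolding cc_def by (rule Least_le) blast

lemma cut_le:
  assumes u: "u \<noteq> []"
  shows "cc {x. length x = i} {y. length y = m - i} (\<lambda>x y. SInv 104 u (x @ y)) \<le> 2"
  using SInv_cases[OF u]
proof
  assume "\<forall>x. SInv 104 u x"
  then have "cc {x. length x = i} {y. length y = m - i} (\<lambda>x y. SInv 104 u (x @ y)) \<le> prot_depth (Leaf True :: (bool list, bool list, bool) protocol)"
    by (intro cc_le) simp
  then show ?thesis by simp
next
  assume h: "\<forall>x. SInv 104 u x = ok u x"
  define Pr :: "(bool list, bool list, bool) protocol" where
    "Pr = AliceNode (ok u) (BobNode (\<lambda>y. \<forall>j<length y. y ! j = per u (int i + int j)) (Leaf True) (Leaf False)) (Leaf False)"
  have "cc {x. length x = i} {y. length y = m - i} (\<lambda>x y. SInv 104 u (x @ y)) \<le> prot_depth Pr"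
    by (intro cc_le) (auto simp: Pr_def h ok_append)
  moreover have "prot_depth Pr = 2" by (simp add: Pr_def)
  ultimately show ?thesis by simp
qed

theorem mainTheorem16:
  shows "\<forall>u::bool list. u \<noteq> [] \<longrightarrow>
           (\<exists>C::nat. \<forall>n::nat. cc_word (SInv 104 u) n \<le> C)"
proof (intro allI impI exI[of _ 2])
  fix u :: "bool list" and n :: nat
  assume u: "u \<noteq> []"
  show "cc_word (SInv 104 u) n \<le> 2"
  proof (cases "n = 0")
    case True then show ?thesis by (simp add: cc_word_def)
  next
    case False
    have "(MAX i\<in>{..<n}. cc {x. length x = i} {y. length y = n - i} (\<lambda>x y. SInv 104 u (x @ y))) \<le> 2"
      using False cut_le[OF u] by (subst Max_le_iff) auto
    then show ?thesis using False unfolding cc_word_def by simp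
  qed
qed

end
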